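(* $\mathrm{GL}_3(\mathbb{F}_5)$ does not contain a subgroup isomorphic to $A_5\times V_4$.
   Context: $V_4\cong C_2\times C_2$ is the Klein four-group. *)

theory Defs
  imports "HOL-Analysis.Analysis" "HOL-Library.Numeral_Type"
    "HOL-Algebra.Sym_Groups" "HOL-Algebra.Elementary_Groups"
begin

text \<open>The finite field F_5 is represented by the type 5 (the integers modulo 5,
  a commutative ring from HOL-Library.Numeral_Type).\<close>

definition GL3_F5 :: "((5^3)^3) monoid" where
  "GL3_F5 = \<lparr> carrier = {A :: (5^3)^3. invertible A}, mult = (\<lambda>A B. A ** B), one = mat 1 \<rparr>"

definition V4 :: "(int \<times> int) monoid" where
  "V4 = integer_mod_group 2 \<times>\<times> integer_mod_group 2"

end

theory Submission
  imports Defs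
begin

lemma five_cases: "(x::5) = 0 \<or> x = 1 \<or> x = 2 \<or> x = 3 \<or> x = 4"
proof (cases x)
  case (of_int z)
  then have "z = 0 \<or> z = 1 \<or> z = 2 \<or> z = 3 \<or> z = 4" by auto
  then show ?thesis using of_int by auto
qed

lemma five_nozd: "(a::5) * b = 0 \<Longrightarrow> a = 0 \<or> b = 0"
  using five_cases[of a] five_cases[of b] by auto

lemma scal_cancel:
  assumes "(c::5) *s w = d *s w" "w \<noteq> 0" shows "c = d"
proof -
  obtain i where i: "w $ i \<noteq> 0" using assms(2) by (auto simp: vec_eq_iff)
  have "c * w $ i = d * w $ i" using assms(1) by (auto simp: vec_eq_iff)
  then have "(c - d) * w $ i = 0" by (simp add: algebra_simps)
  then show ?thesis using five_nozd[of "c - d" "w $ i"] i by auto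
qed

lemma mv_add: "(A::'a::comm_ring_1^'n^'m) *v (x + y) = A *v x + A *v y"
  by (simp add: matrix_vector_right_distrib)
lemma mv_scale: "(A::'a::comm_ring_1^'n^'m) *v (c *s x) = c *s (A *v x)"
  by (simp add: vec_eq_iff matrix_vector_mult_def sum_distrib_left algebra_simps)
lemma mv_sum: "finite S \<Longrightarrow> (A::'a::comm_ring_1^'n^'m) *v (sum f S) = sum (\<lambda>s. A *v f s) S"
  by (induct S rule: finite_induct) (auto simp: mv_add)

definition sg :: "bool \<Rightarrow> 5" where "sg b = (if b then -1 else 1)"

lemma sg_sq[simp]: "sg b * sg b = 1" by (simp add: sg_def)
lemma sg_mult: "sg a * sg b = sg (a \<noteq> b)" by (simp add: sg_def)

type_synonym b4 = "bool \<times> bool \<times> bool \<times> bool"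

lemma sum_prod_UNIV: "(\<Sum>p\<in>(UNIV::('a::finite\<times>'b::finite) set). f p) = (\<Sum>x\<in>UNIV. \<Sum>y\<in>UNIV. f (x,y))"
  by (subst UNIV_Times_UNIV[symmetric]) (rule sum.cartesian_product[symmetric, of "\<lambda>x y. f (x,y)", simplified])

lemma sum_bool: "(\<Sum>b\<in>(UNIV::bool set). f b) = f True + f False"
  by (simp add: UNIV_bool add.commute)

lemma sum_b4: "(\<Sum>s\<in>(UNIV::b4 set). f s) =
  (\<Sum>a\<in>UNIV. \<Sum>b\<in>UNIV. \<Sum>c\<in>UNIV. \<Sum>d\<in>UNIV. f (a,b,c,d))"
  by (simp only: sum_prod_UNIV)

lemma five_zero[simp]: "(5::5) = 0" by simp

locale ci =
  fixes g :: "nat \<Rightarrow> (5^3)^3"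
  assumes comm: "g i ** g j = g j ** g i"
    and inv: "g i ** g i = mat 1"
begin

definition Q :: "nat \<Rightarrow> bool \<Rightarrow> 5^3 \<Rightarrow> 5^3" where
  "Q i b x = 3 *s (x + sg b *s (g i *v x))"

lemma Gcomm: "g i *v (g j *v x) = g j *v (g i *v x)"
  by (simp add: matrix_vector_mul_assoc comm)
lemma Ginv: "g i *v (g i *v x) = x"
  by (simp add: matrix_vector_mul_assoc inv)

lemma Q_add: "Q i b (x + y) = Q i b x + Q i b y"
  by (simp add: Q_def mv_add vec_eq_iff algebra_simps)
lemma Q_scale: "Q i b (c *s x) = c *s Q i b x"
  by (simp add: Q_def mv_scale mv_add vec_eq_iff algebra_simps)
lemma Q_zero: "Q i b 0 = 0"
  by (simp add: Q_def vec_eq_iff matrix_vector_mult_def)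
lemma GQ: "i \<noteq> j \<Longrightarrow> g i *v Q j b x = Q j b (g i *v x)"
  by (simp add: Q_def mv_scale mv_add Gcomm)
lemma GQ_same: "g i *v Q i b x = sg b *s Q i b x"
proof -
  have "g i *v Q i b x = 3 *s (g i *v x + sg b *s x)"
    by (simp add: Q_def mv_scale mv_add Ginv)
  also have "\<dots> = sg b *s Q i b x"
    by (simp add: Q_def vec_eq_iff algebra_simps sg_def)
  finally show ?thesis .
qed
lemma Q_sum: "Q i True x + Q i False x = x"
  by (simp add: Q_def vec_eq_iff sg_def algebra_simps)
lemma Q_eig: "g i *v w = sg s *s w \<Longrightarrow> Q i b w = (if b = s then w else 0)"
  by (auto simp: Q_def vec_eq_iff sg_def algebra_simps)

definition P :: "b4 \<Rightarrow> 5^3 \<Rightarrow> 5^3" where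
  "P s x = (case s of (a,b,c,d) \<Rightarrow> Q 0 a (Q 1 b (Q 2 c (Q 3 d x))))"

definition eig :: "b4 \<Rightarrow> 5^3 \<Rightarrow> bool" where
  "eig s w = (case s of (a,b,c,d) \<Rightarrow> g 0 *v w = sg a *s w \<and> g 1 *v w = sg b *s w
     \<and> g 2 *v w = sg c *s w \<and> g 3 *v w = sg d *s w)"

lemma P_add: "P s (x + y) = P s x + P s y"
  by (cases s) (simp add: P_def Q_add)
lemma P_scale: "P s (c *s x) = c *s P s x"
  by (cases s) (simp add: P_def Q_scale)

lemma P_eig: "eig s (P s x)"
  by (cases s) (simp add: P_def eig_def GQ GQ_same Q_scale)

lemma P_on_eig4:
  assumes "eig (a,b,c,d) w"
  shows "P (a',b',c',d') w = (if (a',b',c',d') = (a,b,c,d) then w else 0)"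
proof -
  have q: "Q 0 a' w = (if a' = a then w else 0)" "Q 1 b' w = (if b' = b then w else 0)"
    "Q 2 c' w = (if c' = c then w else 0)" "Q 3 d' w = (if d' = d then w else 0)"
    using assms by (simp_all add: eig_def Q_eig)
  show ?thesis
    unfolding P_def prod.case q(4) if_distrib[of "Q 2 c'"] q(3) Q_zero if_distrib[of "Q 1 b'"] q(2)
      Q_zero if_distrib[of "Q 0 a'"] q(1) Q_zero by auto
qed

lemma P_on_eig: "eig s w \<Longrightarrow> P t w = (if t = s then w else 0)"
  using P_on_eig4 by (cases s; cases t) blast

lemma P_sum: "x = (\<Sum>s\<in>UNIV. P s x)"
  by (simp only: sum_b4 sum_bool P_def prod.case Q_add[symmetric] Q_sum)

definition Em :: "b4 \<Rightarrow> (5^3)^3" where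
  "Em e = (case e of (a,b,c,d) \<Rightarrow> (if a then g 0 else mat 1) ** ((if b then g 1 else mat 1) **
     ((if c then g 2 else mat 1) ** (if d then g 3 else mat 1))))"

definition chi :: "b4 \<Rightarrow> b4 \<Rightarrow> bool" where
  "chi s e = (case s of (a,b,c,d) \<Rightarrow> case e of (a',b',c',d') \<Rightarrow>
      (a \<and> a') \<noteq> ((b \<and> b') \<noteq> ((c \<and> c') \<noteq> (d \<and> d'))))"

lemma Em_eig4:
  assumes "eig (a,b,c,d) w"
  shows "Em (a',b',c',d') *v w = sg (chi (a,b,c,d) (a',b',c',d')) *s w"
proof -
  have h: "(if a' then g 0 else mat 1) *v w = sg (a \<and> a') *s w"
    "(if b' then g 1 else mat 1) *v w = sg (b \<and> b') *s w"
    "(if c' then g 2 else mat 1) *v w = sg (c \<and> c') *s w"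
    "(if d' then g 3 else mat 1) *v w = sg (d \<and> d') *s w"
    using assms by (auto simp: eig_def sg_def)
  have "Em (a',b',c',d') *v w = sg ((((d \<and> d') \<noteq> (c \<and> c')) \<noteq> (b \<and> b')) \<noteq> (a \<and> a')) *s w"
    by (simp only: Em_def prod.case matrix_vector_mul_assoc[symmetric] h mv_scale
        vector_smult_assoc sg_mult)
  moreover have "(((d \<and> d') \<noteq> (c \<and> c')) \<noteq> (b \<and> b')) \<noteq> (a \<and> a') = chi (a,b,c,d) (a',b',c',d')"
    unfolding chi_def by auto
  ultimately show ?thesis by simp
qed

lemma Em_eig: "eig s w \<Longrightarrow> Em e *v w = sg (chi s e) *s w"
  using Em_eig4 by (cases s; cases e) blast

lemma Em_sum: "Em e *v x = (\<Sum>s\<in>UNIV. sg (chi s e) *s P s x)"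
proof -
  have "Em e *v x = Em e *v (\<Sum>s\<in>UNIV. P s x)" using P_sum[of x] by simp
  also have "\<dots> = (\<Sum>s\<in>UNIV. Em e *v P s x)" by (simp add: mv_sum)
  also have "\<dots> = (\<Sum>s\<in>UNIV. sg (chi s e) *s P s x)" by (rule sum.cong[OF refl], rule Em_eig[OF P_eig])
  finally show ?thesis .
qed

lemma card_S: "card {s. \<exists>x. P s x \<noteq> 0} \<le> 3"
proof (rule ccontr)
  define S where "S = {s. \<exists>x. P s x \<noteq> 0}"
  assume "\<not> card {s. \<exists>x. P s x \<noteq> 0} \<le> 3"
  then have "4 \<le> card S" unfolding S_def by simp
  then obtain T where T: "T \<subseteq> S" "card T = Suc 3"
  proof -
    obtain T where "T \<subseteq> S" "card T = 4" using obtain_subset_with_card_n[OF \<open>4 \<le> card S\<close>] by blast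
    then show ?thesis using that[of T] by simp
  qed
  obtain s1 B where B: "T = insert s1 B" "s1 \<notin> B" "card B = 3"
    using T(2) unfolding card_Suc_eq by blast
  obtain s2 s3 s4 where B2: "B = {s2,s3,s4}" "s2 \<noteq> s3" "s3 \<noteq> s4" "s2 \<noteq> s4"
    using B(3) unfolding card_3_iff by blast
  have d: "s1 \<noteq> s2" "s1 \<noteq> s3" "s1 \<noteq> s4" using B B2 by auto
  have inS: "s1 \<in> S" "s2 \<in> S" "s3 \<in> S" "s4 \<in> S" using T B B2 by auto
  obtain x1 x2 x3 x4 where x: "P s1 x1 \<noteq> 0" "P s2 x2 \<noteq> 0" "P s3 x3 \<noteq> 0" "P s4 x4 \<noteq> 0"
    using inS unfolding S_def by blast
  define w1 where "w1 = P s1 x1"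
  define w2 where "w2 = P s2 x2"
  define w3 where "w3 = P s3 x3"
  define w4 where "w4 = P s4 x4"
  have e: "eig s1 w1" "eig s2 w2" "eig s3 w3" "eig s4 w4"
    unfolding w1_def w2_def w3_def w4_def by (auto simp: P_eig)
  have nz: "w1 \<noteq> 0" "w2 \<noteq> 0" "w3 \<noteq> 0" "w4 \<noteq> 0"
    using x unfolding w1_def w2_def w3_def w4_def by auto
  define f :: "5\<times>5\<times>5\<times>5 \<Rightarrow> 5^3" where
    "f = (\<lambda>(c1,c2,c3,c4). c1 *s w1 + c2 *s w2 + c3 *s w3 + c4 *s w4)"
  have Pw: "P t (c *s w1) = (if t = s1 then c *s w1 else 0)"
    "P t (c *s w2) = (if t = s2 then c *s w2 else 0)"
    "P t (c *s w3) = (if t = s3 then c *s w3 else 0)"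
    "P t (c *s w4) = (if t = s4 then c *s w4 else 0)" for t c
    by (simp_all only: P_scale P_on_eig[OF e(1)] P_on_eig[OF e(2)] P_on_eig[OF e(3)]
        P_on_eig[OF e(4)] if_distrib[of "(*s) c"] vector_smult_rzero)
  have Pf: "P t (f (c1,c2,c3,c4)) = (if t = s1 then c1 *s w1 else 0) + (if t = s2 then c2 *s w2 else 0)
     + (if t = s3 then c3 *s w3 else 0) + (if t = s4 then c4 *s w4 else 0)" for t c1 c2 c3 c4
    by (simp only: f_def prod.case P_add Pw)
  have "inj f"
  proof (rule injI)
    fix c d assume eq: "f c = f d"
    obtain c1 c2 c3 c4 where c: "c = (c1,c2,c3,c4)" by (cases c) auto
    obtain d1 d2 d3 d4 where dd: "d = (d1,d2,d3,d4)" by (cases d) auto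
    have "P s1 (f c) = P s1 (f d)" "P s2 (f c) = P s2 (f d)" "P s3 (f c) = P s3 (f d)"
      "P s4 (f c) = P s4 (f d)" using eq by auto
    then have "c1 *s w1 = d1 *s w1" "c2 *s w2 = d2 *s w2" "c3 *s w3 = d3 *s w3" "c4 *s w4 = d4 *s w4"
      unfolding c dd Pf using d B2 by auto
    then show "c = d" unfolding c dd using scal_cancel nz by blast
  qed
  then have "card (UNIV::(5\<times>5\<times>5\<times>5) set) \<le> card (UNIV::(5^3) set)"
    by (intro card_inj_on_le[of f]) auto
  then show False by (simp add: UNIV_Times_UNIV[symmetric] card_cartesian_product del: UNIV_Times_UNIV)
qed

theorem core: assumes "inj Em" shows False
proof -
  define S where "S = {s. \<exists>x. P s x \<noteq> 0}"
  have cS: "card S \<le> 3" using card_S unfolding S_def .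
  define r where "r e = restrict (\<lambda>s. chi s e) S" for e
  have fS: "finite S" by simp
  have "r ` UNIV \<subseteq> PiE S (\<lambda>_. UNIV)" unfolding r_def by auto
  moreover have "card (PiE S (\<lambda>_. UNIV::bool set)) = 2 ^ card S"
    using card_PiE[OF fS, of "\<lambda>_. UNIV::bool set"] by simp
  moreover have "(2::nat) ^ card S \<le> 2 ^ 3" using cS by (intro power_increasing) auto
  ultimately have "\<not> inj r"
  proof -
    assume a: "r ` UNIV \<subseteq> PiE S (\<lambda>_. UNIV)" "card (PiE S (\<lambda>_. UNIV::bool set)) = 2 ^ card S"
      "(2::nat) ^ card S \<le> 2 ^ 3"
    show "\<not> inj r"
    proof
      assume "inj r"
      then have "card (UNIV::b4 set) \<le> card (PiE S (\<lambda>_. UNIV::bool set))"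
        using a(1) by (intro card_inj_on_le[of r]) (auto simp: finite_PiE)
      then show False using a by simp
    qed
  qed
  then obtain e e' where ee: "e \<noteq> e'" "r e = r e'" unfolding inj_def by blast
  have ch: "chi s e = chi s e'" if "s \<in> S" for s
    using fun_cong[OF ee(2), of s] that unfolding r_def by auto
  have "Em e = Em e'"
  proof (subst matrix_eq, intro allI)
    fix x
    show "Em e *v x = Em e' *v x"
      unfolding Em_sum
    proof (rule sum.cong)
      fix s assume "s \<in> (UNIV::b4 set)"
      show "sg (chi s e) *s P s x = sg (chi s e') *s P s x"
      proof (cases "s \<in> S")
        case True then show ?thesis using ch by simp
      next
        case False then have "P s x = 0" unfolding S_def by auto
        then show ?thesis by simp
      qed
    qed simp
  qed
  then show False using assms ee(1) unfolding inj_def by blast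
qed

end

definition p1 :: "nat \<Rightarrow> nat" where "p1 = Transposition.transpose 1 2 \<circ> Transposition.transpose 3 4"
definition p2 :: "nat \<Rightarrow> nat" where "p2 = Transposition.transpose 1 3 \<circ> Transposition.transpose 2 4"

definition Agen :: "nat \<Rightarrow> (nat \<Rightarrow> nat) \<times> int \<times> int" where
  "Agen i = (if i = 0 then (p1,0,0) else if i = 1 then (p2,0,0) else if i = 2 then (id,1,0)
     else if i = 3 then (id,0,1) else (id,0,0))"

lemma alt_carrier[simp]: "carrier (alt_group n) = {p. p permutes {1..n} \<and> evenperm p}"
  by (simp add: alt_group_def sym_group_def)
lemma alt_one[simp]: "\<one>\<^bsub>alt_group n\<^esub> = id"
  by (simp add: alt_group_def sym_group_def)
lemma alt_mult[simp]: "x \<otimes>\<^bsub>alt_group n\<^esub> y = x \<circ> y"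
  by (simp add: alt_group_def sym_group_def)
lemma V4_carrier[simp]: "carrier V4 = {0..<2} \<times> {0..<2}"
  by (simp add: V4_def carrier_integer_mod_group)
lemma V4_one[simp]: "\<one>\<^bsub>V4\<^esub> = (0, 0)"
  by (simp add: V4_def)
lemma V4_mult[simp]: "x \<otimes>\<^bsub>V4\<^esub> y = ((fst x + fst y) mod 2, (snd x + snd y) mod 2)"
  by (simp add: V4_def mult_DirProd')

lemma multGG: "x \<otimes>\<^bsub>alt_group 5 \<times>\<times> V4\<^esub> y =
  (fst x \<circ> fst y, (fst (snd x) + fst (snd y)) mod 2, (snd (snd x) + snd (snd y)) mod 2)"
  by (simp add: mult_DirProd')

lemma oneGG: "\<one>\<^bsub>alt_group 5 \<times>\<times> V4\<^esub> = (id, 0, 0)"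
  by simp

lemma carrierGG: "carrier (alt_group 5 \<times>\<times> V4) =
  {p. p permutes {1..5} \<and> evenperm p} \<times> ({0..<2} \<times> {0..<2})"
  by simp

lemma groupGG: "group (alt_group 5 \<times>\<times> V4)"
  unfolding V4_def by (intro DirProd_group alt_group_is_group group_integer_mod_group)

lemma p_perm: "p1 permutes {1..5}" "evenperm p1" "p2 permutes {1..5}" "evenperm p2"
  unfolding p1_def p2_def
  by (auto intro!: permutes_compose permutes_swap_id simp: evenperm_comp permutation_swap_id evenperm_swap)

lemma p_perm': "p1 permutes {Suc 0..5}" "p2 permutes {Suc 0..5}"
  using p_perm by simp_all

lemma Agen_carrier: "Agen i \<in> carrier (alt_group 5 \<times>\<times> V4)"
  by (auto simp: Agen_def carrierGG p_perm p_perm' permutes_id)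

lemma p12: "p1 \<circ> p2 = p2 \<circ> p1" "p1 \<circ> p1 = id" "p2 \<circ> p2 = id"
  by (auto simp: fun_eq_iff p1_def p2_def Transposition.transpose_def)

lemma Agen_comm: "Agen i \<otimes>\<^bsub>alt_group 5 \<times>\<times> V4\<^esub> Agen j = Agen j \<otimes>\<^bsub>alt_group 5 \<times>\<times> V4\<^esub> Agen i"
  by (auto simp: multGG Agen_def p12)

lemma Agen_sq: "Agen i \<otimes>\<^bsub>alt_group 5 \<times>\<times> V4\<^esub> Agen i = \<one>\<^bsub>alt_group 5 \<times>\<times> V4\<^esub>"
  by (auto simp: multGG oneGG Agen_def p12)

definition Bg :: "nat \<Rightarrow> bool \<Rightarrow> (nat \<Rightarrow> nat) \<times> int \<times> int" where
  "Bg i b = (if b then Agen i else (id,0,0))"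

definition prodB :: "b4 \<Rightarrow> (nat \<Rightarrow> nat) \<times> int \<times> int" where
  "prodB e = (case e of (a,b,c,d) \<Rightarrow> Bg 0 a \<otimes>\<^bsub>alt_group 5 \<times>\<times> V4\<^esub> (Bg 1 b \<otimes>\<^bsub>alt_group 5 \<times>\<times> V4\<^esub>
     (Bg 2 c \<otimes>\<^bsub>alt_group 5 \<times>\<times> V4\<^esub> Bg 3 d)))"

lemma prodB_vals:
  "fst (prodB (a,b,c,d)) 1 = (if a then (if b then 4 else 2) else (if b then 3 else 1))"
  "fst (snd (prodB (a,b,c,d))) = (if c then 1 else 0)"
  "snd (snd (prodB (a,b,c,d))) = (if d then 1 else 0)"
  by (cases a; cases b; cases c; cases d; simp add: prodB_def Bg_def multGG Agen_def p1_def p2_def Transposition.transpose_def)+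

lemma prodB_inj: "inj prodB"
proof (rule injI)
  fix e e' assume eq: "prodB e = prodB e'"
  obtain a b c d where e: "e = (a,b,c,d)" by (cases e) auto
  obtain a' b' c' d' where e': "e' = (a',b',c',d')" by (cases e') auto
  have "fst (prodB (a,b,c,d)) 1 = fst (prodB (a',b',c',d')) 1"
    "fst (snd (prodB (a,b,c,d))) = fst (snd (prodB (a',b',c',d')))"
    "snd (snd (prodB (a,b,c,d))) = snd (snd (prodB (a',b',c',d')))"
    using eq unfolding e e' by simp_all
  then have "(if a then (if b then 4 else 2) else (if b then 3 else 1)) =
        (if a' then (if b' then 4 else 2) else (if b' then 3 else 1)::nat)"
    "(if c then 1 else 0) = (if c' then 1 else (0::int))"
    "(if d then 1 else 0) = (if d' then 1 else (0::int))"
    unfolding prodB_vals by simp_all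
  then show "e = e'" unfolding e e'
    by (cases a; cases b; cases c; cases d; cases a'; cases b'; cases c'; cases d'; simp)
qed

theorem lemma3p18:
  shows "\<not> (\<exists>H. subgroup H GL3_F5 \<and> (GL3_F5\<lparr>carrier := H\<rparr>) \<cong> (alt_group 5 \<times>\<times> V4))"
proof
  assume "\<exists>H. subgroup H GL3_F5 \<and> (GL3_F5\<lparr>carrier := H\<rparr>) \<cong> (alt_group 5 \<times>\<times> V4)"
  then obtain H where sub: "subgroup H GL3_F5" and iso: "(GL3_F5\<lparr>carrier := H\<rparr>) \<cong> (alt_group 5 \<times>\<times> V4)"
    by blast
  define GG where "GG = alt_group 5 \<times>\<times> V4"
  obtain h where h: "h \<in> iso (GL3_F5\<lparr>carrier := H\<rparr>) GG" using iso unfolding is_iso_def GG_def by blast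
  have hom: "h \<in> hom (GL3_F5\<lparr>carrier := H\<rparr>) GG" and surj: "h ` H = carrier GG" and inj: "inj_on h H"
    using h unfolding iso_iff by auto
  have hm: "h (x ** y) = h x \<otimes>\<^bsub>GG\<^esub> h y" if "x \<in> H" "y \<in> H" for x y
    using hom_mult[OF hom, of x y] that by (simp add: GL3_F5_def)
  have Hc: "x ** y \<in> H" if "x \<in> H" "y \<in> H" for x y
    using subgroup.m_closed[OF sub that] by (simp add: GL3_F5_def)
  have H1: "mat 1 \<in> H" using subgroup.one_closed[OF sub] by (simp add: GL3_F5_def)
  have grp: "group GG" unfolding GG_def by (rule groupGG)
  have hc: "h x \<in> carrier GG" if "x \<in> H" for x using surj that by blast
  have h1: "h (mat 1) = \<one>\<^bsub>GG\<^esub>"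
  proof -
    have "h (mat 1) \<otimes>\<^bsub>GG\<^esub> h (mat 1) = h (mat 1)" using hm[OF H1 H1] by simp
    then show ?thesis using group.l_cancel_one[OF grp hc[OF H1] hc[OF H1]] by simp
  qed
  define g where "g i = (SOME m. m \<in> H \<and> h m = Agen i)" for i
  have gex: "\<exists>m. m \<in> H \<and> h m = Agen i" for i
    using Agen_carrier[of i] surj unfolding GG_def by (metis imageE)
  have gH: "g i \<in> H" and hg: "h (g i) = Agen i" for i
    using someI_ex[OF gex[of i]] unfolding g_def by auto
  have comm: "g i ** g j = g j ** g i" for i j
    by (rule inj_onD[OF inj]) (auto simp: hm gH Hc hg Agen_comm[unfolded GG_def[symmetric]])
  have inv: "g i ** g i = mat 1" for i
    by (rule inj_onD[OF inj]) (auto simp: hm gH Hc H1 hg h1 Agen_sq[unfolded GG_def[symmetric]])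
  interpret ci g using comm inv by unfold_locales auto
  have MH: "(if b then g i else mat 1) \<in> H" for b i using gH H1 by auto
  have hM: "h (if b then g i else mat 1) = Bg i b" for b i
    using hg h1 by (auto simp: Bg_def GG_def oneGG)
  have EmH: "Em e \<in> H" and hEm: "h (Em e) = prodB e" for e
    by (cases e; simp add: Em_def prodB_def MH Hc hm hM GG_def)+
  have "inj Em"
  proof (rule injI)
    fix e e' assume "Em e = Em e'"
    then have "prodB e = prodB e'" using hEm by metis
    then show "e = e'" by (rule injD[OF prodB_inj])
  qed
  then show False by (rule core)
qed

end
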